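(* Let $\epsilon>0$. After $K=\tau\ln(\frac1\epsilon)$ iterations of Dual KOSZ starting from $\mathbf x^0=0$, we have $\mathcal B(\mathbf x^* )-\mathbb E[\mathcal B(\mathbf x^K)]\le\epsilon\cdot\mathcal B(\mathbf x^* )$.
   Context: $G=(V,E)$ is a connected undirected graph with resistances $r(e)>0$; $\mathbf b\in\mathbb R^V$ with $\sum_ib(i)=0$; $\mathbf L=\sum_{ij\in E}\frac1{r(i,j)}(\mathbf e_i-\mathbf e_j)(\mathbf e_i-\mathbf e_j)^\top$, $\mathcal B(\mathbf x)=\mathbf b^\top\mathbf x-\frac12\mathbf x^\top\mathbf L\mathbf x$, $\mathbf x^*$ maximizes $\mathcal B$. $T$ is a rooted spanning tree with edges directed toward the root; $C(i,j)$ is the vertex set of the component of $T-ij$ containing $i$; $R(C)=(\sum_{e\in\delta(C)}1/r(e))^{-1}$, $b(C)=\sum_{v\in C}b(v)$, $f_{\mathbf x}(C)=\sum_{kl\in E,k\in C,l\notin C}\frac{x(k)-x(l)}{r(k,l)}$; $\tau=\sum_{(i,j)\in T}\frac{r(i,j)}{R(C(i,j))}$. Dual KOSZ: $\mathbf x^0=0$; each iteration independently samples a tree edge $(i,j)$ with probability $\frac1\tau\frac{r(i,j)}{R(C(i,j))}$, and with $C=C(i,j)$ sets $\mathbf x^{t+1}=\mathbf x^t+(b(C)-f_{\mathbf x^t}(C))R(C)\mathbbm 1_C$. *)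

theory Defs
  imports "HOL-Probability.Probability"
begin

definition graph_edges_ok :: "'a set set \<Rightarrow> bool" where
  "graph_edges_ok E \<longleftrightarrow> (\<forall>e\<in>E. card e = 2)"

definition graph_connected :: "'a set set \<Rightarrow> bool" where
  "graph_connected E \<longleftrightarrow> (\<forall>u v. (u, v) \<in> {(k, l). {k, l} \<in> E}\<^sup>*)"

text \<open>Laplacian L = sum over edges ij of 1/r(ij) (e_i - e_j)(e_i - e_j)^T; for e = {i,j}
  the (u,v) entry of (e_i - e_j)(e_i - e_j)^T is 1 if u = v in e, -1 if u,v in e, u ~= v, else 0.\<close>
definition lap :: "('a set \<Rightarrow> real) \<Rightarrow> 'a set set \<Rightarrow> 'a \<Rightarrow> 'a \<Rightarrow> real" where
  "lap r E u v = (\<Sum>e\<in>E. (1 / r e) * (if u \<in> e \<and> v \<in> e then (if u = v then 1 else -1) else 0))"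

definition Bfun :: "('a::finite \<Rightarrow> real) \<Rightarrow> ('a set \<Rightarrow> real) \<Rightarrow> 'a set set \<Rightarrow> ('a \<Rightarrow> real) \<Rightarrow> real" where
  "Bfun b r E x = (\<Sum>v\<in>UNIV. b v * x v) - 1/2 * (\<Sum>u\<in>UNIV. \<Sum>v\<in>UNIV. x u * lap r E u v * x v)"

definition cut_edges :: "'a set set \<Rightarrow> 'a set \<Rightarrow> 'a set set" where
  "cut_edges E C = {e\<in>E. \<exists>k\<in>C. \<exists>l. l \<notin> C \<and> e = {k, l}}"

definition Rcut :: "('a set \<Rightarrow> real) \<Rightarrow> 'a set set \<Rightarrow> 'a set \<Rightarrow> real" where
  "Rcut r E C = inverse (\<Sum>e\<in>cut_edges E C. 1 / r e)"

definition bset :: "('a \<Rightarrow> real) \<Rightarrow> 'a set \<Rightarrow> real" where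
  "bset b C = (\<Sum>v\<in>C. b v)"

definition flow :: "('a::finite set \<Rightarrow> real) \<Rightarrow> 'a set set \<Rightarrow> ('a \<Rightarrow> real) \<Rightarrow> 'a set \<Rightarrow> real" where
  "flow r E x C = (\<Sum>k\<in>C. \<Sum>l\<in>- C. if {k, l} \<in> E then (x k - x l) / r {k, l} else 0)"

text \<open>Rooted spanning tree, edges (i,j) directed toward the root rho: every tree edge is a graph
  edge, the root has no outgoing edge, every other vertex has exactly one outgoing edge,
  and every vertex reaches the root.\<close>
definition rooted_spanning_tree :: "'a set set \<Rightarrow> ('a \<times> 'a) set \<Rightarrow> 'a \<Rightarrow> bool" where
  "rooted_spanning_tree E T rho \<longleftrightarrow>
     (\<forall>(i, j)\<in>T. {i, j} \<in> E) \<and>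
     (\<forall>j. (rho, j) \<notin> T) \<and>
     (\<forall>i. i \<noteq> rho \<longrightarrow> (\<exists>!j. (i, j) \<in> T)) \<and>
     (\<forall>v. (v, rho) \<in> T\<^sup>*)"

text \<open>C(i,j): vertex set of the component of T - ij (undirected) containing i.\<close>
definition tree_comp :: "('a \<times> 'a) set \<Rightarrow> 'a \<Rightarrow> 'a \<Rightarrow> 'a set" where
  "tree_comp T i j = {v. (i, v) \<in> ((T - {(i, j)}) \<union> (T - {(i, j)})\<inverse>)\<^sup>*}"

definition tau :: "('a::finite set \<Rightarrow> real) \<Rightarrow> 'a set set \<Rightarrow> ('a \<times> 'a) set \<Rightarrow> real" where
  "tau r E T = (\<Sum>(i, j)\<in>T. r {i, j} / Rcut r E (tree_comp T i j))"

definition edge_pmf :: "('a::finite set \<Rightarrow> real) \<Rightarrow> 'a set set \<Rightarrow> ('a \<times> 'a) set \<Rightarrow> ('a \<times> 'a) pmf" where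
  "edge_pmf r E T = embed_pmf (\<lambda>(i, j). if (i, j) \<in> T
       then (1 / tau r E T) * (r {i, j} / Rcut r E (tree_comp T i j)) else 0)"

definition kosz_update :: "('a::finite \<Rightarrow> real) \<Rightarrow> ('a set \<Rightarrow> real) \<Rightarrow> 'a set set \<Rightarrow> ('a \<times> 'a) set
    \<Rightarrow> ('a \<Rightarrow> real) \<Rightarrow> ('a \<times> 'a) \<Rightarrow> ('a \<Rightarrow> real)" where
  "kosz_update b r E T x ij = (let C = tree_comp T (fst ij) (snd ij) in
     (\<lambda>v. x v + (bset b C - flow r E x C) * Rcut r E C * indicator C v))"

fun kosz_dist :: "('a::finite \<Rightarrow> real) \<Rightarrow> ('a set \<Rightarrow> real) \<Rightarrow> 'a set set \<Rightarrow> ('a \<times> 'a) set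
    \<Rightarrow> nat \<Rightarrow> ('a \<Rightarrow> real) pmf" where
  "kosz_dist b r E T 0 = return_pmf (\<lambda>_. 0)"
| "kosz_dist b r E T (Suc K) =
     bind_pmf (kosz_dist b r E T K) (\<lambda>x. map_pmf (kosz_update b r E T x) (edge_pmf r E T))"

end

theory Submission
  imports Defs
begin

definition lf :: "('a set \<Rightarrow> real) \<Rightarrow> 'a set set \<Rightarrow> ('a::finite \<Rightarrow> real) \<Rightarrow> ('a \<Rightarrow> real) \<Rightarrow> real" where
  "lf r E x z = (\<Sum>u\<in>UNIV. \<Sum>v\<in>UNIV. x u * lap r E u v * z v)"

definition et :: "('a \<Rightarrow> real) \<Rightarrow> ('a \<Rightarrow> real) \<Rightarrow> 'a set \<Rightarrow> real" where
  "et x z e = (\<Sum>u\<in>e. \<Sum>v\<in>e. x u * z v * (if u = v then 1 else -1))"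

lemma Bfun_lf: "Bfun b r E x = (\<Sum>v\<in>UNIV. b v * x v) - 1/2 * lf r E x x"
  unfolding Bfun_def lf_def by simp

lemma lf_edge: "lf r E x z = (\<Sum>e\<in>E. (1 / r e) * et x z e)"
proof -
  have "lf r E x z = (\<Sum>u\<in>UNIV. \<Sum>v\<in>UNIV. \<Sum>e\<in>E. (1 / r e) * (x u * z v * (if u \<in> e \<and> v \<in> e then (if u = v then 1 else -1) else 0)))"
    unfolding lf_def lap_def by (simp add: sum_distrib_left sum_distrib_right algebra_simps)
  also have "\<dots> = (\<Sum>e\<in>E. (1 / r e) * (\<Sum>u\<in>UNIV. \<Sum>v\<in>UNIV. (x u * z v * (if u \<in> e \<and> v \<in> e then (if u = v then 1 else -1) else 0))))"
    by (simp add: sum_distrib_left sum.swap[of _ UNIV E] sum.swap[of _ UNIV E])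
  also have "\<dots> = (\<Sum>e\<in>E. (1 / r e) * et x z e)"
  proof (rule sum.cong[OF refl])
    fix e :: "'a set"
    have U: "\<And>h::'a\<Rightarrow>real. (\<Sum>v\<in>UNIV. if v \<in> e then h v else 0) = sum h e"
      by (simp add: sum.If_cases)
    have "(\<Sum>u\<in>UNIV. \<Sum>v\<in>UNIV. (x u * z v * (if u \<in> e \<and> v \<in> e then (if u = v then 1 else -1) else 0)))
        = (\<Sum>u\<in>UNIV. if u \<in> e then (\<Sum>v\<in>e. x u * z v * (if u = v then 1 else -1)) else 0)"
    proof (intro sum.cong refl)
      fix u
      show "(\<Sum>v\<in>UNIV. (x u * z v * (if u \<in> e \<and> v \<in> e then (if u = v then 1 else -1) else 0)))
        = (if u \<in> e then (\<Sum>v\<in>e. x u * z v * (if u = v then 1 else -1)) else 0)"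
      proof (cases "u \<in> e")
        case True
        have "(\<Sum>v\<in>UNIV. (x u * z v * (if u \<in> e \<and> v \<in> e then (if u = v then 1 else -1) else 0)))
           = (\<Sum>v\<in>UNIV. if v \<in> e then x u * z v * (if u = v then 1 else -1) else 0)"
          using True by (intro sum.cong refl) auto
        then show ?thesis using True U[of "\<lambda>v. x u * z v * (if u = v then 1 else -1)"] by simp
      next
        case False
        then show ?thesis by (simp)
      qed
    qed
    also have "\<dots> = et x z e" unfolding et_def by (simp add: sum.If_cases Int_def)
    finally show "(1 / r e) * (\<Sum>u\<in>UNIV. \<Sum>v\<in>UNIV. (x u * z v * (if u \<in> e \<and> v \<in> e then (if u = v then 1 else -1) else 0))) = (1 / r e) * et x z e" by simp
  qed
  finally show ?thesis .
qed

lemma et_pair: "k \<noteq> l \<Longrightarrow> et x z {k, l} = (x k - x l) * (z k - z l)"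
  unfolding et_def by (simp add: algebra_simps)

lemma card2: "card e = 2 \<Longrightarrow> \<exists>k l. k \<noteq> l \<and> e = {k, l}"
  by (metis card_2_iff)

lemma et_sym: "card e = 2 \<Longrightarrow> et x z e = et z x e"
  using card2[of e] by (auto simp: et_pair)

lemma et_sq: "card e = 2 \<Longrightarrow> et x x e \<ge> 0"
  using card2[of e] by (auto simp: et_pair)

lemma et_const: "et (\<lambda>_. c) z e = 0 \<or> card e \<noteq> 2"
  using card2[of e] by (auto simp: et_pair)

lemma lf_sym: "graph_edges_ok E \<Longrightarrow> lf r E x z = lf r E z x"
  unfolding lf_edge graph_edges_ok_def by (intro sum.cong refl) (simp add: et_sym)

lemma lf_nonneg: "graph_edges_ok E \<Longrightarrow> \<forall>e\<in>E. r e > 0 \<Longrightarrow> lf r E x x \<ge> 0"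
  unfolding lf_edge graph_edges_ok_def by (intro sum_nonneg) (simp add: et_sq less_imp_le)

lemma lf_const: "graph_edges_ok E \<Longrightarrow> lf r E (\<lambda>_. c) z = 0"
  unfolding lf_edge graph_edges_ok_def
proof (intro sum.neutral ballI)
  fix e assume "\<forall>e\<in>E. card e = 2" "e \<in> E"
  then show "1 / r e * et (\<lambda>_. c) z e = 0" using et_const[of c z e] by auto
qed

lemma lf_lin1: "lf r E (\<lambda>v. x v + t * w v) z = lf r E x z + t * lf r E w z"
  unfolding lf_def by (simp add: algebra_simps sum.distrib sum_distrib_left)

lemma lf_lin2: "lf r E z (\<lambda>v. x v + t * w v) = lf r E z x + t * lf r E z w"
  unfolding lf_def by (simp add: algebra_simps sum.distrib sum_distrib_left)


context
  fixes T :: "('a::finite \<times> 'a) set" and rho :: 'a and E :: "'a set set"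
  assumes tree: "rooted_spanning_tree E T rho"
begin

lemma tE: "(i, j) \<in> T \<Longrightarrow> {i, j} \<in> E"
  using tree unfolding rooted_spanning_tree_def by auto

lemma troot: "(rho, j) \<notin> T"
  using tree unfolding rooted_spanning_tree_def by auto

lemma treach: "(v, rho) \<in> T\<^sup>*"
  using tree unfolding rooted_spanning_tree_def by auto

lemma tdet: "(i, j) \<in> T \<Longrightarrow> (i, j') \<in> T \<Longrightarrow> j = j'"
  using tree unfolding rooted_spanning_tree_def by (metis)

lemma tsucc: "i \<noteq> rho \<Longrightarrow> \<exists>j. (i, j) \<in> T"
  using tree unfolding rooted_spanning_tree_def by (metis)

lemma first_step: "(u, w) \<in> T\<^sup>+ \<Longrightarrow> (u, s) \<in> T \<Longrightarrow> (s, w) \<in> T\<^sup>*"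
  by (metis tdet tranclD)

lemma nocycle: assumes "(i, j) \<in> T" "(j, i) \<in> T\<^sup>*" shows False
proof -
  have ii: "(i, i) \<in> T\<^sup>+" using assms by auto
  have *: "(z, i) \<in> T\<^sup>*" if "(i, z) \<in> T\<^sup>*" for z
    using that
  proof (induction rule: rtrancl_induct)
    case base then show ?case by simp
  next
    case (step z z')
    have "(z, i) \<in> T\<^sup>+"
      using step ii by (metis rtranclD)
    then show ?case using step first_step by blast
  qed
  have "(rho, i) \<in> T\<^sup>*" using *[OF treach] .
  then show False
  proof (cases "rho = i")
    case True then show False using assms troot by auto
  next
    case False
    then have "(rho, i) \<in> T\<^sup>+" using \<open>(rho, i) \<in> T\<^sup>*\<close> by (metis rtranclD)
    then show False using troot by (metis tranclD)
  qed
qed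

lemma comp_eq: assumes ij: "(i, j) \<in> T" shows "tree_comp T i j = {v. (v, i) \<in> T\<^sup>*}"
proof
  let ?R = "(T - {(i, j)}) \<union> (T - {(i, j)})\<inverse>"
  show "{v. (v, i) \<in> T\<^sup>*} \<subseteq> tree_comp T i j"
  proof
    fix v assume "v \<in> {v. (v, i) \<in> T\<^sup>*}"
    then have "(v, i) \<in> T\<^sup>*" by simp
    then have "(i, v) \<in> ?R\<^sup>*"
    proof (induction rule: converse_rtrancl_induct)
      case base then show ?case by simp
    next
      case (step v w)
      have "(v, w) \<noteq> (i, j)"
      proof
        assume "(v, w) = (i, j)"
        then show False using step nocycle by auto
      qed
      then have "(w, v) \<in> ?R" using step by auto
      then show ?case using step by (meson rtrancl.rtrancl_into_rtrancl)
    qed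
    then show "v \<in> tree_comp T i j" unfolding tree_comp_def by simp
  qed
  show "tree_comp T i j \<subseteq> {v. (v, i) \<in> T\<^sup>*}"
  proof
    fix v assume "v \<in> tree_comp T i j"
    then have "(i, v) \<in> ?R\<^sup>*" unfolding tree_comp_def by simp
    then have "(v, i) \<in> T\<^sup>*"
    proof (induction rule: rtrancl_induct)
      case base then show ?case by simp
    next
      case (step u w)
      show ?case
      proof (cases "(u, w) \<in> T - {(i, j)}")
        case True
        show ?thesis
        proof (cases "u = i")
          case True
          then show ?thesis using \<open>(u, w) \<in> T - {(i, j)}\<close> ij tdet by blast
        next
          case False
          then have "(u, i) \<in> T\<^sup>+" using step by (metis rtranclD)
          then show ?thesis using True first_step by blast
        qed
      next
        case False
        then have "(w, u) \<in> T" using step by auto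
        then show ?thesis using step by (meson converse_rtrancl_into_rtrancl)
      qed
    qed
    then show "v \<in> {v. (v, i) \<in> T\<^sup>*}" by simp
  qed
qed

lemma j_notin: "(i, j) \<in> T \<Longrightarrow> j \<notin> tree_comp T i j"
  using comp_eq nocycle by blast

lemma i_in: "(i, j) \<in> T \<Longrightarrow> i \<in> tree_comp T i j"
  using comp_eq by blast

lemma telescope:
  "(\<Sum>p\<in>T. if (v, fst p) \<in> T\<^sup>* then y (fst p) - y (snd p) else 0) = y v - (y rho :: real)"
  using treach[of v]
proof (induction rule: converse_rtrancl_induct)
  case base
  have "(\<Sum>p\<in>T. if (rho, fst p) \<in> T\<^sup>* then y (fst p) - y (snd p) else 0) = 0"
  proof (intro sum.neutral ballI)
    fix p assume p: "p \<in> T"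
    have "\<not> (rho, fst p) \<in> T\<^sup>*"
    proof
      assume h: "(rho, fst p) \<in> T\<^sup>*"
      show False
      proof (cases "fst p = rho")
        case True then show False using p troot by (metis prod.collapse)
      next
        case False
        then have "(rho, fst p) \<in> T\<^sup>+" using h by (metis rtranclD)
        then show False using troot by (metis tranclD)
      qed
    qed
    then show "(if (rho, fst p) \<in> T\<^sup>* then y (fst p) - y (snd p) else 0) = 0" by simp
  qed
  then show ?case by simp
next
  case (step v w)
  have eq: "(v, i) \<in> T\<^sup>* \<longleftrightarrow> i = v \<or> (w, i) \<in> T\<^sup>*" for i
  proof
    assume h: "(v, i) \<in> T\<^sup>*"
    show "i = v \<or> (w, i) \<in> T\<^sup>*"
    proof (cases "i = v")
      case False
      then have "(v, i) \<in> T\<^sup>+" using h by (metis rtranclD)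
      then show ?thesis using step first_step by blast
    qed simp
  next
    assume "i = v \<or> (w, i) \<in> T\<^sup>*"
    then show "(v, i) \<in> T\<^sup>*" using step by (meson converse_rtrancl_into_rtrancl rtrancl.rtrancl_refl)
  qed
  have nwv: "\<not> (w, v) \<in> T\<^sup>*" using step nocycle by blast
  have "(\<Sum>p\<in>T. if (v, fst p) \<in> T\<^sup>* then y (fst p) - y (snd p) else 0)
      = (\<Sum>p\<in>T. (if fst p = v then y (fst p) - y (snd p) else 0)
              + (if (w, fst p) \<in> T\<^sup>* then y (fst p) - y (snd p) else 0))"
    by (intro sum.cong refl) (use eq nwv in auto)
  also have "\<dots> = (\<Sum>p\<in>T. if fst p = v then y (fst p) - y (snd p) else 0) + (y w - y rho)"
    using step by (simp add: sum.distrib)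
  also have "(\<Sum>p\<in>T. if fst p = v then y (fst p) - y (snd p) else 0) = y v - y w"
  proof -
    have "{p \<in> T. fst p = v} = {(v, w)}" using step tdet by auto
    then have "(\<Sum>p\<in>T. if fst p = v then y (fst p) - y (snd p) else 0) = (\<Sum>p\<in>{(v, w)}. y (fst p) - y (snd p))"
      by (subst sum.inter_filter[symmetric]) auto
    then show ?thesis by simp
  qed
  finally show ?case by simp
qed


context
  fixes r :: "'a set \<Rightarrow> real" and b :: "'a \<Rightarrow> real" and xstar :: "'a \<Rightarrow> real"
  assumes E2: "graph_edges_ok E" and rpos: "\<forall>e\<in>E. r e > 0"
    and opt: "\<forall>x. Bfun b r E x \<le> Bfun b r E xstar"
begin

lemma edge_pair: assumes "e \<in> E" shows "\<exists>k l. k \<noteq> l \<and> e = {k, l}"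
proof -
  have "card e = 2" using E2 assms unfolding graph_edges_ok_def by auto
  then show ?thesis by (rule card2)
qed

lemma tree_ident:
  "lf r E y y = (\<Sum>p\<in>T. (y (fst p) - y (snd p)) * lf r E (indicator (tree_comp T (fst p) (snd p))) y)"
proof -
  define d where "d u = (\<Sum>v\<in>UNIV. lap r E u v * y v)" for u
  have lfd: "lf r E z y = (\<Sum>u\<in>UNIV. z u * d u)" for z
    unfolding lf_def d_def by (simp add: sum_distrib_left mult.assoc)
  have d0: "(\<Sum>u\<in>UNIV. d u) = 0"
    using lfd[of "\<lambda>_. 1"] lf_const[OF E2, of r 1 y] by simp
  have C: "lf r E (indicator (tree_comp T (fst p) (snd p))) y = (\<Sum>u\<in>UNIV. if (u, fst p) \<in> T\<^sup>* then d u else 0)"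
    if "p \<in> T" for p
  proof -
    have "tree_comp T (fst p) (snd p) = {v. (v, fst p) \<in> T\<^sup>*}" using comp_eq that by simp
    then show ?thesis unfolding lfd by (intro sum.cong refl) (simp add: indicator_def)
  qed
  have "(\<Sum>p\<in>T. (y (fst p) - y (snd p)) * lf r E (indicator (tree_comp T (fst p) (snd p))) y)
      = (\<Sum>p\<in>T. \<Sum>u\<in>UNIV. d u * (if (u, fst p) \<in> T\<^sup>* then y (fst p) - y (snd p) else 0))"
    by (intro sum.cong refl) (auto simp: C sum_distrib_left intro!: sum.cong)
  also have "\<dots> = (\<Sum>u\<in>UNIV. d u * (\<Sum>p\<in>T. if (u, fst p) \<in> T\<^sup>* then y (fst p) - y (snd p) else 0))"
    by (simp add: sum.swap[of _ T UNIV] sum_distrib_left)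
  also have "\<dots> = (\<Sum>u\<in>UNIV. d u * (y u - y rho))"
    by (simp add: telescope)
  also have "\<dots> = (\<Sum>u\<in>UNIV. y u * d u) - y rho * (\<Sum>u\<in>UNIV. d u)"
    by (simp add: algebra_simps sum_subtractf sum_distrib_left)
  also have "\<dots> = lf r E y y" using d0 lfd[of y] by simp
  finally show ?thesis by simp
qed


lemma tree_energy:
  "(\<Sum>p\<in>T. (y (fst p) - y (snd p))^2 / r {fst p, snd p}) \<le> lf r E y y"
proof -
  let ?f = "\<lambda>p. {fst p, snd p}"
  let ?g = "\<lambda>e. (1 / r e) * et y y e"
  have ne: "fst p \<noteq> snd p" if "p \<in> T" for p
  proof -
    have "{fst p, snd p} \<in> E" using tE that by (metis prod.collapse)
    then have "card {fst p, snd p} = 2" using E2 unfolding graph_edges_ok_def by auto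
    then show ?thesis by auto
  qed
  have inj: "inj_on ?f T"
  proof (rule inj_onI)
    fix p q assume p: "p \<in> T" and q: "q \<in> T" and eq: "{fst p, snd p} = {fst q, snd q}"
    show "p = q"
    proof (cases "fst p = fst q")
      case True then show ?thesis using p q tdet by (metis prod.collapse)
    next
      case False
      then have "fst p = snd q" "snd p = fst q" using eq by (auto simp: doubleton_eq_iff)
      then show ?thesis using p q nocycle by (metis prod.collapse r_into_rtrancl)
    qed
  qed
  have sub: "?f ` T \<subseteq> E" using tE by auto
  have "(\<Sum>p\<in>T. (y (fst p) - y (snd p))^2 / r {fst p, snd p}) = (\<Sum>p\<in>T. ?g (?f p))"
    by (intro sum.cong refl) (simp add: et_pair ne power2_eq_square)
  also have "\<dots> = (\<Sum>e\<in>?f ` T. ?g e)" using sum.reindex[OF inj, of ?g] by (simp add: o_def)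
  also have "\<dots> \<le> (\<Sum>e\<in>E. ?g e)"
    using sub E2 rpos unfolding graph_edges_ok_def by (intro sum_mono2) (auto simp: et_sq less_imp_le)
  also have "\<dots> = lf r E y y" by (simp add: lf_edge)
  finally show ?thesis .
qed

lemma main_ineq:
  "lf r E y y \<le> (\<Sum>p\<in>T. r {fst p, snd p} * (lf r E (indicator (tree_comp T (fst p) (snd p))) y)^2)"
proof -
  let ?a = "\<lambda>p. y (fst p) - y (snd p)"
  let ?g = "\<lambda>p. lf r E (indicator (tree_comp T (fst p) (snd p))) y"
  let ?r = "\<lambda>p. r {fst p, snd p}"
  have pt: "?a p * ?g p \<le> (?a p)^2 / (2 * ?r p) + ?r p * (?g p)^2 / 2" if "p \<in> T" for p
  proof -
    have rp: "?r p > 0" using tE that rpos by (metis prod.collapse)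
    have "0 \<le> (?a p - ?r p * ?g p)^2 / (2 * ?r p)" using rp by simp
    also have "\<dots> = (?a p)^2 / (2 * ?r p) + ?r p * (?g p)^2 / 2 - ?a p * ?g p"
      using rp by (simp add: field_simps power2_eq_square)
    finally show ?thesis by simp
  qed
  have "lf r E y y = (\<Sum>p\<in>T. ?a p * ?g p)" by (rule tree_ident)
  also have "\<dots> \<le> (\<Sum>p\<in>T. (?a p)^2 / (2 * ?r p) + ?r p * (?g p)^2 / 2)"
    by (rule sum_mono) (rule pt)
  also have "\<dots> = (\<Sum>p\<in>T. (?a p)^2 / ?r p) / 2 + (\<Sum>p\<in>T. ?r p * (?g p)^2) / 2"
    by (simp add: sum.distrib sum_divide_distrib mult.commute)
  also have "\<dots> \<le> lf r E y y / 2 + (\<Sum>p\<in>T. ?r p * (?g p)^2) / 2"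
    using tree_energy[of y] by simp
  finally show ?thesis by simp
qed


lemma Bexpand:
  "Bfun b r E (\<lambda>v. x v + t * z v) = Bfun b r E x + t * ((\<Sum>v\<in>UNIV. b v * z v) - lf r E x z) - t^2/2 * lf r E z z"
proof -
  have "lf r E (\<lambda>v. x v + t * z v) (\<lambda>v. x v + t * z v) = lf r E x x + 2 * t * lf r E x z + t^2 * lf r E z z"
    using lf_sym[OF E2, of r z x] by (simp add: lf_lin1 lf_lin2 algebra_simps power2_eq_square)
  then show ?thesis unfolding Bfun_lf
    by (simp add: algebra_simps sum.distrib sum_distrib_left power2_eq_square)
qed

lemma lf_opt: "lf r E xstar z = (\<Sum>v\<in>UNIV. b v * z v)"
proof (rule ccontr)
  define c where "c = (\<Sum>v\<in>UNIV. b v * z v) - lf r E xstar z"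
  define q where "q = lf r E z z"
  assume "lf r E xstar z \<noteq> (\<Sum>v\<in>UNIV. b v * z v)"
  then have c0: "c \<noteq> 0" unfolding c_def by simp
  have q0: "q \<ge> 0" unfolding q_def using lf_nonneg[OF E2 rpos] .
  define t where "t = c / (q + 1)"
  have "Bfun b r E (\<lambda>v. xstar v + t * z v) \<le> Bfun b r E xstar" using opt by simp
  then have le: "t * c - t^2/2 * q \<le> 0" unfolding Bexpand c_def q_def by simp
  have qq: "q + 1 > 0" using q0 by simp
  have e1: "t * (q+1) = c" using qq unfolding t_def by simp
  have "(q+1)^2 * (t * c - t^2/2 * q) = (t*(q+1)) * c * (q+1) - (t*(q+1))^2 / 2 * q"
    by (simp add: power2_eq_square algebra_simps)
  also have "\<dots> = c^2 * (q/2 + 1)" unfolding e1 by (simp add: power2_eq_square algebra_simps)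
  also have "\<dots> > 0" using c0 q0 by simp
  finally have "t * c - t^2/2 * q > 0" using qq by (metis zero_less_mult_pos zero_less_power)
  then show False using le by linarith
qed

lemma gap: "Bfun b r E xstar - Bfun b r E x = 1/2 * lf r E (\<lambda>v. xstar v - x v) (\<lambda>v. xstar v - x v)"
proof -
  have xe: "(\<lambda>v. xstar v + (-1) * (xstar v - x v)) = x" by simp
  have "Bfun b r E x = Bfun b r E (\<lambda>v. xstar v + (-1) * (xstar v - x v))" unfolding xe ..
  also have "\<dots> = Bfun b r E xstar - 1/2 * lf r E (\<lambda>v. xstar v - x v) (\<lambda>v. xstar v - x v)"
    unfolding Bexpand lf_opt by simp
  finally show ?thesis by simp
qed

lemma lf_cut: "lf r E (indicator C) (indicator C) = (\<Sum>e\<in>cut_edges E C. 1 / r e)"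
proof -
  have per: "et (indicator C) (indicator C) e = (if e \<in> cut_edges E C then 1 else 0)" if eE: "e \<in> E" for e
  proof -
    obtain k l where kl: "k \<noteq> l" "e = {k, l}" using edge_pair[OF eE] by blast
    have "e \<in> cut_edges E C \<longleftrightarrow> (k \<in> C \<and> l \<notin> C) \<or> (l \<in> C \<and> k \<notin> C)"
    proof
      assume "e \<in> cut_edges E C"
      then obtain a c where ac: "a \<in> C" "c \<notin> C" "e = {a, c}" unfolding cut_edges_def by blast
      then have "(k = a \<and> l = c) \<or> (k = c \<and> l = a)" using kl doubleton_eq_iff[of k l a c] by simp
      then show "(k \<in> C \<and> l \<notin> C) \<or> (l \<in> C \<and> k \<notin> C)" using ac by blast
    next
      assume h: "(k \<in> C \<and> l \<notin> C) \<or> (l \<in> C \<and> k \<notin> C)"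
      have "{k, l} = {l, k}" by blast
      then show "e \<in> cut_edges E C" using h that kl unfolding cut_edges_def by blast
    qed
    then show ?thesis using kl by (simp add: et_pair indicator_def split: if_splits)
  qed
  have "lf r E (indicator C) (indicator C) = (\<Sum>e\<in>E. if e \<in> cut_edges E C then 1 / r e else 0)"
    unfolding lf_edge by (intro sum.cong refl) (simp add: per)
  also have "\<dots> = (\<Sum>e\<in>{e\<in>E. e \<in> cut_edges E C}. 1 / r e)"
    by (simp add: sum.inter_filter)
  also have "{e\<in>E. e \<in> cut_edges E C} = cut_edges E C" unfolding cut_edges_def by auto
  finally show ?thesis .
qed

lemma pairsum:
  "(\<Sum>e\<in>E. h e) = 1/2 * (\<Sum>k\<in>UNIV. \<Sum>l\<in>UNIV. if {k, l} \<in> E then h {k, l} else (0::real))"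
proof -
  let ?f = "\<lambda>p. {fst p, snd p}"
  let ?P = "{p. {fst p, snd p} \<in> E}"
  have "(\<Sum>k\<in>UNIV. \<Sum>l\<in>UNIV. if {k, l} \<in> E then h {k, l} else 0)
      = (\<Sum>p\<in>UNIV. if ?f p \<in> E then h (?f p) else 0)"
    by (simp add: sum.cartesian_product case_prod_beta)
  also have "\<dots> = (\<Sum>p\<in>?P. h (?f p))"
    by (subst sum.inter_filter[symmetric]) auto
  also have "\<dots> = (\<Sum>e\<in>?f ` ?P. \<Sum>p\<in>{p\<in>?P. ?f p = e}. h (?f p))"
    by (rule sum.image_gen) simp
  also have "?f ` ?P = E"
  proof
    show "?f ` ?P \<subseteq> E" by auto
    show "E \<subseteq> ?f ` ?P"
    proof
      fix e assume "e \<in> E"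
      then obtain k l where "k \<noteq> l" "e = {k, l}" using edge_pair by blast
      then show "e \<in> ?f ` ?P" using \<open>e \<in> E\<close> by (auto intro!: image_eqI[of _ _ "(k, l)"])
    qed
  qed
  also have "(\<Sum>e\<in>E. \<Sum>p\<in>{p\<in>?P. ?f p = e}. h (?f p)) = (\<Sum>e\<in>E. 2 * h e)"
  proof (rule sum.cong[OF refl])
    fix e assume "e \<in> E"
    then obtain k l where kl: "k \<noteq> l" "e = {k, l}" using edge_pair by blast
    have S: "{p\<in>?P. ?f p = e} = {(k, l), (l, k)}"
    proof (rule set_eqI)
      fix p :: "'a \<times> 'a"
      obtain a c where p: "p = (a, c)" by fastforce
      have "p \<in> {p\<in>?P. ?f p = e} \<longleftrightarrow> {a, c} = {k, l}" using kl \<open>e \<in> E\<close> p by auto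
      also have "\<dots> \<longleftrightarrow> (a = k \<and> c = l) \<or> (a = l \<and> c = k)" by (rule doubleton_eq_iff)
      also have "\<dots> \<longleftrightarrow> p \<in> {(k, l), (l, k)}" using p by simp
      finally show "p \<in> {p\<in>?P. ?f p = e} \<longleftrightarrow> p \<in> {(k, l), (l, k)}" .
    qed
    have "(\<Sum>p\<in>{p\<in>?P. ?f p = e}. h (?f p)) = (\<Sum>p\<in>{p\<in>?P. ?f p = e}. h e)"
      by (intro sum.cong refl) auto
    also have "\<dots> = (\<Sum>p\<in>{(k, l), (l, k)}. h e)" by (simp only: S)
    also have "\<dots> = 2 * h e" using kl by simp
    finally show "(\<Sum>p\<in>{p\<in>?P. ?f p = e}. h (?f p)) = 2 * h e" .
  qed
  finally have fin: "(\<Sum>k\<in>UNIV. \<Sum>l\<in>UNIV. if {k, l} \<in> E then h {k, l} else 0) = (\<Sum>e\<in>E. 2 * h e)" .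
  have "(\<Sum>e\<in>E. 2 * h e) = 2 * sum h E" by (rule sum_distrib_left[symmetric])
  then show ?thesis using fin by linarith
qed

lemma lf_F: "lf r E x z = (\<Sum>k\<in>UNIV. z k * (\<Sum>l\<in>UNIV. if {k, l} \<in> E then (x k - x l) / r {k, l} else 0))"
proof -
  define F where "F k l = (if {k, l} \<in> E then (x k - x l) / r {k, l} else 0)" for k l
  have anti: "F l k = - F k l" for k l unfolding F_def by (simp add: insert_commute divide_simps)
  have "lf r E x z = 1/2 * (\<Sum>k\<in>UNIV. \<Sum>l\<in>UNIV. if {k, l} \<in> E then (1 / r {k, l}) * et x z {k, l} else 0)"
    unfolding lf_edge by (rule pairsum)
  also have "(\<Sum>k\<in>UNIV. \<Sum>l\<in>UNIV. if {k, l} \<in> E then (1 / r {k, l}) * et x z {k, l} else 0)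
     = (\<Sum>k\<in>UNIV. \<Sum>l\<in>UNIV. F k l * z k - F k l * z l)"
  proof (intro sum.cong refl)
    fix k l
    show "(if {k, l} \<in> E then (1 / r {k, l}) * et x z {k, l} else 0) = F k l * z k - F k l * z l"
    proof (cases "{k, l} \<in> E")
      case True
      then have "card {k, l} = 2" using E2 unfolding graph_edges_ok_def by blast
      then have "k \<noteq> l" by (cases "k = l") auto
      then show ?thesis using True unfolding F_def by (simp add: et_pair divide_inverse algebra_simps)
    next
      case False then show ?thesis unfolding F_def by simp
    qed
  qed
  also have "\<dots> = (\<Sum>k\<in>UNIV. \<Sum>l\<in>UNIV. F k l * z k) - (\<Sum>k\<in>UNIV. \<Sum>l\<in>UNIV. F k l * z l)"
    by (simp add: sum_subtractf)
  also have "(\<Sum>k\<in>UNIV. \<Sum>l\<in>UNIV. F k l * z l) = (\<Sum>l\<in>UNIV. \<Sum>k\<in>UNIV. F k l * z l)"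
    by (rule sum.swap)
  also have "\<dots> = - (\<Sum>l\<in>UNIV. \<Sum>k\<in>UNIV. F l k * z l)"
    by (simp only: sum_negf[symmetric]) (intro sum.cong refl, metis anti minus_mult_left)
  finally have "lf r E x z = (\<Sum>k\<in>UNIV. \<Sum>l\<in>UNIV. F k l * z k)" by simp
  also have "\<dots> = (\<Sum>k\<in>UNIV. z k * (\<Sum>l\<in>UNIV. F k l))"
    by (simp add: sum_distrib_left mult.commute)
  finally show ?thesis unfolding F_def .
qed

lemma lf_flow: "lf r E x (indicator C) = flow r E x C"
proof -
  define F where "F k l = (if {k, l} \<in> E then (x k - x l) / r {k, l} else 0)" for k l
  have anti: "F l k = - F k l" for k l unfolding F_def by (simp add: insert_commute divide_simps)
  have "lf r E x (indicator C) = (\<Sum>k\<in>UNIV. indicator C k * (\<Sum>l\<in>UNIV. F k l))"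
    unfolding lf_F F_def ..
  also have "\<dots> = (\<Sum>k\<in>C. \<Sum>l\<in>UNIV. F k l)"
    by (simp add: indicator_def sum.If_cases)
  also have "\<dots> = (\<Sum>k\<in>C. (\<Sum>l\<in>C. F k l) + (\<Sum>l\<in>-C. F k l))"
  proof (intro sum.cong refl)
    fix k
    have "(\<Sum>l\<in>UNIV. F k l) = (\<Sum>l\<in>UNIV - C. F k l) + (\<Sum>l\<in>C. F k l)"
      by (rule sum.subset_diff) auto
    then show "(\<Sum>l\<in>UNIV. F k l) = (\<Sum>l\<in>C. F k l) + (\<Sum>l\<in>-C. F k l)"
      by (simp add: Compl_eq_Diff_UNIV)
  qed
  also have "\<dots> = (\<Sum>k\<in>C. \<Sum>l\<in>C. F k l) + (\<Sum>k\<in>C. \<Sum>l\<in>-C. F k l)"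
    by (rule sum.distrib)
  also have "(\<Sum>k\<in>C. \<Sum>l\<in>C. F k l) = 0"
  proof -
    have "(\<Sum>k\<in>C. \<Sum>l\<in>C. F k l) = (\<Sum>l\<in>C. \<Sum>k\<in>C. F k l)" by (rule sum.swap)
    also have "\<dots> = - (\<Sum>l\<in>C. \<Sum>k\<in>C. F l k)" by (simp only: sum_negf[symmetric]) (intro sum.cong refl, metis anti minus_mult_left)
    finally show ?thesis by simp
  qed
  finally show ?thesis unfolding flow_def F_def by simp
qed


lemma bset_ind: "(\<Sum>v\<in>UNIV. b v * indicator C v) = bset b C"
  unfolding bset_def by (simp add: indicator_def sum.If_cases)

lemma upd_gain:
  "Bfun b r E (\<lambda>v. x v + (bset b C - flow r E x C) * Rcut r E C * indicator C v)
     = Bfun b r E x + (bset b C - flow r E x C)^2 * Rcut r E C / 2"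
proof -
  define D where "D = bset b C - flow r E x C"
  define S where "S = (\<Sum>e\<in>cut_edges E C. 1 / r e)"
  have R: "Rcut r E C = inverse S" unfolding Rcut_def S_def ..
  have "Bfun b r E (\<lambda>v. x v + D * Rcut r E C * indicator C v)
     = Bfun b r E x + D * Rcut r E C * D - (D * Rcut r E C)^2 / 2 * S"
    unfolding Bexpand unfolding lf_cut unfolding bset_ind lf_flow D_def S_def by simp
  also have "\<dots> = Bfun b r E x + D^2 * Rcut r E C / 2"
  proof (cases "S = 0")
    case True then show ?thesis by (simp add: R)
  next
    case False
    then have "Rcut r E C * S = 1" using R by simp
    then have "D * Rcut r E C * D - (D * Rcut r E C)^2 / 2 * S = D^2 * Rcut r E C / 2"
      by (simp add: power2_eq_square algebra_simps)
    then show ?thesis by simp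
  qed
  finally show ?thesis unfolding D_def .
qed

lemma Delta_eq: "bset b C - flow r E x C = lf r E (indicator C) (\<lambda>v. xstar v - x v)"
proof -
  have "lf r E (indicator C) (\<lambda>v. xstar v - x v) = lf r E (indicator C) (\<lambda>v. xstar v + (-1) * x v)"
    by simp
  also have "\<dots> = lf r E (indicator C) xstar - lf r E (indicator C) x"
    by (simp only: lf_lin2)
  also have "\<dots> = bset b C - flow r E x C"
    using lf_sym[OF E2] lf_opt lf_flow bset_ind by metis
  finally show ?thesis by simp
qed

definition wt :: "'a \<times> 'a \<Rightarrow> real" where
  "wt p = r {fst p, snd p} / Rcut r E (tree_comp T (fst p) (snd p))"

lemma tree_edge_R:
  assumes p: "p \<in> T"
  shows "Rcut r E (tree_comp T (fst p) (snd p)) > 0" and "wt p \<ge> 1"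
proof -
  obtain i j where pij: "p = (i, j)" by fastforce
  let ?C = "tree_comp T i j"
  have ij: "(i, j) \<in> T" using p pij by simp
  have e: "{i, j} \<in> cut_edges E ?C"
    unfolding cut_edges_def using tE[OF ij] i_in[OF ij] j_notin[OF ij] by blast
  have rij: "r {i, j} > 0" using rpos tE[OF ij] by blast
  have fin: "finite (cut_edges E ?C)" by simp
  have nn: "\<forall>e\<in>cut_edges E ?C. 0 \<le> 1 / r e" using rpos unfolding cut_edges_def by auto
  have S: "(\<Sum>e\<in>cut_edges E ?C. 1 / r e) \<ge> 1 / r {i, j}"
    by (rule member_le_sum[OF e _ fin]) (use nn in auto)
  have Spos: "(\<Sum>e\<in>cut_edges E ?C. 1 / r e) > 0" using S rij
    by (meson less_le_trans zero_less_divide_1_iff)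
  show "Rcut r E (tree_comp T (fst p) (snd p)) > 0"
    using Spos pij unfolding Rcut_def by simp
  have "wt p = r {i, j} * (\<Sum>e\<in>cut_edges E ?C. 1 / r e)"
    unfolding wt_def Rcut_def pij by (simp add: divide_inverse)
  also have "\<dots> \<ge> r {i, j} * (1 / r {i, j})" using S rij by (intro mult_left_mono) auto
  finally show "wt p \<ge> 1" using rij by simp
qed

lemma tau_wt: "tau r E T = (\<Sum>p\<in>T. wt p)"
  unfolding tau_def wt_def by (simp add: case_prod_beta)

lemma tau_ge1: "T \<noteq> {} \<Longrightarrow> tau r E T \<ge> 1"
proof -
  assume "T \<noteq> {}"
  then obtain p where p: "p \<in> T" by blast
  have "1 \<le> wt p" using tree_edge_R(2)[OF p] .
  also have "wt p \<le> (\<Sum>p\<in>T. wt p)"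
    using tree_edge_R(2) by (intro member_le_sum[OF p]) (auto intro: order_trans[OF zero_le_one])
  finally show ?thesis unfolding tau_wt .
qed

lemma pmf_edge:
  assumes tp: "tau r E T > 0"
  shows "pmf (edge_pmf r E T) p = (if p \<in> T then wt p / tau r E T else 0)"
proof -
  define f where "f = (\<lambda>(i, j). if (i, j) \<in> T
       then (1 / tau r E T) * (r {i, j} / Rcut r E (tree_comp T i j)) else 0)"
  have f: "f p = (if p \<in> T then wt p / tau r E T else 0)" for p
    unfolding f_def wt_def by (simp add: case_prod_beta)
  have nn: "0 \<le> f p" for p
  proof -
    have "p \<in> T \<Longrightarrow> 0 \<le> wt p" using tree_edge_R(2)[of p] by linarith
    then show ?thesis unfolding f using tp by auto
  qed
  have "(\<Sum>p\<in>UNIV. f p) = (\<Sum>p\<in>T. wt p / tau r E T)"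
    unfolding f by (simp add: sum.If_cases)
  also have "\<dots> = 1" using tp unfolding tau_wt by (simp add: sum_divide_distrib[symmetric])
  finally have s1: "(\<Sum>p\<in>UNIV. f p) = 1" .
  have "(\<integral>\<^sup>+x. ennreal (f x) \<partial>count_space UNIV) = (\<Sum>x\<in>UNIV. ennreal (f x))"
    by (simp add: nn_integral_count_space_finite)
  also have "\<dots> = ennreal (\<Sum>x\<in>UNIV. f x)" using nn by simp
  finally have "(\<integral>\<^sup>+x. ennreal (f x) \<partial>count_space UNIV) = 1" using s1 by simp
  then have "pmf (embed_pmf f) p = f p" using nn by (intro pmf_embed_pmf) auto
  then show ?thesis unfolding edge_pmf_def f_def[symmetric] f .
qed

lemma exp_edge:
  assumes tp: "tau r E T > 0"
  shows "measure_pmf.expectation (edge_pmf r E T) (h :: _ \<Rightarrow> real) = (\<Sum>p\<in>T. wt p / tau r E T * h p)"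
proof -
  have "measure_pmf.expectation (edge_pmf r E T) h = (\<Sum>p\<in>T. pmf (edge_pmf r E T) p *\<^sub>R h p)"
    by (rule integral_measure_pmf) (auto simp: set_pmf_eq pmf_edge[OF tp] split: if_splits)
  also have "\<dots> = (\<Sum>p\<in>T. wt p / tau r E T * h p)"
    by (intro sum.cong refl) (simp add: pmf_edge[OF tp])
  finally show ?thesis .
qed

lemma step_bound:
  assumes tp: "tau r E T > 0"
  shows "measure_pmf.expectation (edge_pmf r E T) (\<lambda>p. Bfun b r E (kosz_update b r E T x p))
     \<ge> Bfun b r E x + (Bfun b r E xstar - Bfun b r E x) / tau r E T"
proof -
  let ?y = "\<lambda>v. xstar v - x v"
  let ?C = "\<lambda>p. tree_comp T (fst p) (snd p)"
  let ?D = "\<lambda>p. lf r E (indicator (?C p)) ?y"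
  let ?tau = "tau r E T"
  have up: "Bfun b r E (kosz_update b r E T x p) = Bfun b r E x + (?D p)^2 * Rcut r E (?C p) / 2" for p
    unfolding kosz_update_def Let_def upd_gain unfolding Delta_eq ..
  have "measure_pmf.expectation (edge_pmf r E T) (\<lambda>p. Bfun b r E (kosz_update b r E T x p))
      = (\<Sum>p\<in>T. wt p / ?tau * (Bfun b r E x + (?D p)^2 * Rcut r E (?C p) / 2))"
    unfolding exp_edge[OF tp] up ..
  also have "\<dots> = (\<Sum>p\<in>T. wt p / ?tau * Bfun b r E x) + (\<Sum>p\<in>T. r {fst p, snd p} * (?D p)^2) / (2 * ?tau)"
  proof -
    have "wt p / ?tau * ((?D p)^2 * Rcut r E (?C p) / 2) = r {fst p, snd p} * (?D p)^2 / (2 * ?tau)"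
      if "p \<in> T" for p
      using tree_edge_R(1)[OF that] tp unfolding wt_def by (simp add: field_simps)
    then show ?thesis by (simp add: distrib_left sum.distrib sum_divide_distrib)
  qed
  also have "(\<Sum>p\<in>T. wt p / ?tau * Bfun b r E x) = Bfun b r E x"
    using tp by (simp add: sum_distrib_right[symmetric] sum_divide_distrib[symmetric] tau_wt[symmetric])
  finally have eq: "measure_pmf.expectation (edge_pmf r E T) (\<lambda>p. Bfun b r E (kosz_update b r E T x p))
      = Bfun b r E x + (\<Sum>p\<in>T. r {fst p, snd p} * (?D p)^2) / (2 * ?tau)" .
  have "(Bfun b r E xstar - Bfun b r E x) / ?tau = lf r E ?y ?y / (2 * ?tau)"
    unfolding gap by simp
  also have "\<dots> \<le> (\<Sum>p\<in>T. r {fst p, snd p} * (?D p)^2) / (2 * ?tau)"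
    using main_ineq[of ?y] tp by (intro divide_right_mono) simp_all
  finally show ?thesis unfolding eq by simp
qed


lemma fin_dist: "finite (set_pmf (kosz_dist b r E T K))"
  by (induction K) (auto simp: set_bind_pmf)

lemma Bzero: "Bfun b r E (\<lambda>_. 0) = 0"
  unfolding Bfun_def by simp

lemma iter_bound:
  assumes t1: "tau r E T \<ge> 1"
  shows "Bfun b r E xstar - measure_pmf.expectation (kosz_dist b r E T K) (Bfun b r E)
           \<le> (1 - 1 / tau r E T) ^ K * Bfun b r E xstar"
proof (induction K)
  case 0
  then show ?case by (simp add: Bzero)
next
  case (Suc K)
  let ?M = "kosz_dist b r E T K"
  let ?tau = "tau r E T"
  let ?B = "Bfun b r E"
  let ?S = "set_pmf ?M"
  have tp: "?tau > 0" using t1 by simp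
  have EM: "measure_pmf.expectation ?M ?B = (\<Sum>x\<in>?S. pmf ?M x * ?B x)"
    using fin_dist[of K] by (subst integral_measure_pmf[of ?S]) auto
  have s1: "(\<Sum>x\<in>?S. pmf ?M x) = 1" using fin_dist[of K] by (rule sum_pmf_eq_1) simp
  have "measure_pmf.expectation (kosz_dist b r E T (Suc K)) ?B
      = (\<Sum>x\<in>?S. pmf ?M x * measure_pmf.expectation (edge_pmf r E T) (\<lambda>p. ?B (kosz_update b r E T x p)))"
    using fin_dist[of K] by (simp add: pmf_expectation_bind[of ?S])
  also have "\<dots> \<ge> (\<Sum>x\<in>?S. pmf ?M x * (?B x + (?B xstar - ?B x) / ?tau))"
    by (intro sum_mono mult_left_mono step_bound[OF tp]) simp
  finally have ge: "measure_pmf.expectation (kosz_dist b r E T (Suc K)) ?B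
      \<ge> (\<Sum>x\<in>?S. pmf ?M x * (?B x + (?B xstar - ?B x) / ?tau))" .
  have "(\<Sum>x\<in>?S. pmf ?M x * (?B x + (?B xstar - ?B x) / ?tau))
      = (1 - 1 / ?tau) * (\<Sum>x\<in>?S. pmf ?M x * ?B x) + ?B xstar / ?tau * (\<Sum>x\<in>?S. pmf ?M x)"
  proof -
    have "pmf ?M x * (?B x + (?B xstar - ?B x) / ?tau) = (1 - 1 / ?tau) * (pmf ?M x * ?B x) + ?B xstar / ?tau * pmf ?M x" for x
      using tp by (simp add: field_simps)
    then show ?thesis by (simp add: sum.distrib sum_distrib_left)
  qed
  also have "\<dots> = (1 - 1 / ?tau) * measure_pmf.expectation ?M ?B + ?B xstar / ?tau"
    using EM s1 by simp
  finally have "?B xstar - measure_pmf.expectation (kosz_dist b r E T (Suc K)) ?B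
      \<le> (1 - 1 / ?tau) * (?B xstar - measure_pmf.expectation ?M ?B)"
    using ge by (simp add: algebra_simps)
  also have "\<dots> \<le> (1 - 1 / ?tau) * ((1 - 1 / ?tau) ^ K * ?B xstar)"
    using Suc.IH t1 by (intro mult_left_mono) (auto simp: field_simps)
  finally show ?case by simp
qed


end

end

lemma pow_bound:
  fixes tau eps :: real
  assumes t1: "tau \<ge> 1" and e: "eps > 0"
  shows "(1 - 1 / tau) ^ nat \<lceil>tau * ln (1 / eps)\<rceil> \<le> eps"
proof -
  let ?K = "nat \<lceil>tau * ln (1 / eps)\<rceil>"
  have K: "real ?K \<ge> tau * ln (1 / eps)" by linarith
  have tp: "tau > 0" using t1 by simp
  have "(1 - 1 / tau) ^ ?K \<le> exp (- 1 / tau) ^ ?K"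
  proof (rule power_mono)
    show "1 - 1 / tau \<le> exp (- 1 / tau)" using exp_ge_add_one_self[of "- 1 / tau"] by simp
    show "0 \<le> 1 - 1 / tau" using t1 by (simp add: field_simps)
  qed
  also have "\<dots> = exp (real ?K * (- 1 / tau))" by (rule exp_of_nat_mult[symmetric])
  also have "\<dots> \<le> exp (- ln (1 / eps))"
  proof -
    have "real ?K / tau \<ge> ln (1 / eps)" using K tp by (simp add: field_simps)
    then show ?thesis by simp
  qed
  also have "\<dots> = eps" using e by (simp add: ln_div)
  finally show ?thesis .
qed

theorem mainTheorem13:
  fixes E :: "'a::finite set set" and r :: "'a set \<Rightarrow> real" and b :: "'a \<Rightarrow> real"
    and xstar :: "'a \<Rightarrow> real" and T :: "('a \<times> 'a) set" and rho :: 'a and \<epsilon> :: real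
  assumes "graph_edges_ok E"
    and "\<forall>e\<in>E. r e > 0"
    and "graph_connected E"
    and "(\<Sum>v\<in>UNIV. b v) = 0"
    and "\<forall>x. Bfun b r E x \<le> Bfun b r E xstar"
    and "rooted_spanning_tree E T rho"
    and "\<epsilon> > 0"
  shows "Bfun b r E xstar
           - measure_pmf.expectation (kosz_dist b r E T (nat \<lceil>tau r E T * ln (1 / \<epsilon>)\<rceil>)) (Bfun b r E)
         \<le> \<epsilon> * Bfun b r E xstar"
proof (cases "T = {}")
  case True
  have tau0: "tau r E T = 0" unfolding tau_def True by simp
  have U: "v = rho" for v
  proof -
    have "(v, rho) \<in> T\<^sup>*" using assms(6) unfolding rooted_spanning_tree_def by auto
    then show ?thesis using True by (simp add: rtrancl_empty)
  qed
  have xc: "xstar = (\<lambda>_. xstar rho)" using U by (metis)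
  have bs: "(\<Sum>v\<in>UNIV. b v * xstar v) = 0"
  proof -
    have "(\<Sum>v\<in>UNIV. b v * xstar v) = (\<Sum>v\<in>UNIV. b v) * xstar rho"
      by (simp add: sum_distrib_right) (metis U)
    then show ?thesis using assms(4) by simp
  qed
  have "Bfun b r E xstar = 0"
    unfolding Bfun_lf bs using lf_const[OF assms(1), of r "xstar rho" "\<lambda>_. xstar rho"] xc by simp
  then show ?thesis unfolding tau0 using Bzero[OF assms(6,1,2,5)] by simp
next
  case False
  let ?K = "nat \<lceil>tau r E T * ln (1 / \<epsilon>)\<rceil>"
  have t1: "tau r E T \<ge> 1" using tau_ge1[OF assms(6,1,2,5) False] .
  have B0: "Bfun b r E xstar \<ge> 0" using assms(5) Bzero[OF assms(6,1,2,5)] by metis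
  have "Bfun b r E xstar - measure_pmf.expectation (kosz_dist b r E T ?K) (Bfun b r E)
      \<le> (1 - 1 / tau r E T) ^ ?K * Bfun b r E xstar"
    by (rule iter_bound[OF assms(6,1,2,5) t1])
  also have "\<dots> \<le> \<epsilon> * Bfun b r E xstar"
    using pow_bound[OF t1 assms(7)] B0 by (intro mult_right_mono) auto
  finally show ?thesis .
qed

end
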